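(* Let $\alpha\in(1/3,1)$ and $v\in\mathcal{C}^\alpha(\mathbb{R}^d)$. Let $\varepsilon>0$ with $(2+\varepsilon)\alpha>1$ and let $F\in C^{2+\varepsilon}(\mathbb{R}^d,\mathbb{R})$. Then for all $t\in[0,1]$ the limit $\lim_{N\to\infty}\int_0^tS_N(\mathrm{D}F(v))(s)\,d(S_Nv)(s)$ exists and \[ F(v(t))-F(v(0))=\lim_{N\to\infty}\int_0^tS_N(\mathrm{D}F(v))(s)\,d(S_Nv)(s). \] (No assumption on the Lévy area of $v$ is needed.)
   Context: Index set: pairs $(p,m)$ with either $p=-1,m=0$, or $p\in\mathbb{N}=\{0,1,2,\dots\}$ and $0\le m\le 2^p$. For $p\in\mathbb{N}$, $1\le m\le 2^p$ set $t^0_{pm}=(m-1)2^{-p}$, $t^1_{pm}=(2m-1)2^{-p-1}$, $t^2_{pm}=m2^{-p}$. Rescaled Haar functions: for $p\in\mathbb{N}$, $1\le m\le 2^p$, $\chi_{pm}=2^p$ on $[t^0_{pm},t^1_{pm})$, $=-2^p$ on $[t^1_{pm},t^2_{pm})$, $=0$ elsewhere; $\chi_{00}\equiv1$; $\chi_{p0}\equiv0$ for $p\ge1$. Rescaled Schauder functions: $\varphi_{pm}(t)=\int_0^t\chi_{pm}(s)\,ds$ for $p\in\mathbb{N}$, and $\varphi_{-10}\equiv1$. For continuous $f:[0,1]\to E$ ($E$ a finite-dimensional normed space), coefficients: $f_{-10}=f(0)$, $f_{00}=f(1)-f(0)$, $f_{p0}=0$ for $p\ge1$, $f_{pm}=2f(t^1_{pm})-f(t^0_{pm})-f(t^2_{pm})$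 for $p\in\mathbb{N},m\ge1$. $\Delta_pf=\sum_{m=0}^{2^p}f_{pm}\varphi_{pm}$, $S_Nf=\sum_{p=-1}^N\Delta_pf$ (the piecewise linear interpolation of $f$ at the points $k2^{-N-1}$). For $\alpha>0$, $\|f\|_\alpha:=\sup_{p,m}2^{p\alpha}|f_{pm}|$ and $\mathcal{C}^\alpha(E):=\{f\in C([0,1],E):\|f\|_\alpha<\infty\}$. For Lipschitz $g$, $\int_0^tf\,dg:=\int_0^tf(s)g'(s)\,ds$. $C^{2+\varepsilon}$: twice continuously differentiable with locally $\varepsilon$-Hölder second derivative (for $\varepsilon\in(0,1)$). $\mathrm{D}F$ is the gradient, viewed as an element of $L(\mathbb{R}^d,\mathbb{R})$. *)

theory Defs
  imports "HOL-Analysis.Analysis"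
begin

definition tpt0 :: "nat \<Rightarrow> nat \<Rightarrow> real" where
  "tpt0 p m = (real m - 1) / 2 ^ p"
definition tpt1 :: "nat \<Rightarrow> nat \<Rightarrow> real" where
  "tpt1 p m = (2 * real m - 1) / 2 ^ (p + 1)"
definition tpt2 :: "nat \<Rightarrow> nat \<Rightarrow> real" where
  "tpt2 p m = real m / 2 ^ p"

definition haar :: "nat \<Rightarrow> nat \<Rightarrow> real \<Rightarrow> real" where
  "haar p m t =
     (if m = 0 then (if p = 0 then 1 else 0)
      else if tpt0 p m \<le> t \<and> t < tpt1 p m then 2 ^ p
      else if tpt1 p m \<le> t \<and> t < tpt2 p m then - (2 ^ p)
      else 0)"

definition schauder :: "int \<Rightarrow> nat \<Rightarrow> real \<Rightarrow> real" where
  "schauder p m t = (if p = -1 then 1 else integral {0..t} (haar (nat p) m))"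

definition scoeff :: "(real \<Rightarrow> 'b::real_normed_vector) \<Rightarrow> int \<Rightarrow> nat \<Rightarrow> 'b" where
  "scoeff f p m =
     (if p = -1 then f 0
      else if m = 0 then (if p = 0 then f 1 - f 0 else 0)
      else 2 *\<^sub>R f (tpt1 (nat p) m) - f (tpt0 (nat p) m) - f (tpt2 (nat p) m))"

definition valid_index :: "int \<Rightarrow> nat \<Rightarrow> bool" where
  "valid_index p m = ((p = -1 \<and> m = 0) \<or> (p \<ge> 0 \<and> m \<le> 2 ^ nat p))"

definition Delta :: "int \<Rightarrow> (real \<Rightarrow> 'b::real_normed_vector) \<Rightarrow> real \<Rightarrow> 'b" where
  "Delta p f t = (if p = -1 then schauder (-1) 0 t *\<^sub>R scoeff f (-1) 0
                  else (\<Sum>m = 0..2 ^ nat p. schauder p m t *\<^sub>R scoeff f p m))"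

definition SN :: "nat \<Rightarrow> (real \<Rightarrow> 'b::real_normed_vector) \<Rightarrow> real \<Rightarrow> 'b" where
  "SN N f t = (\<Sum>p \<in> {-1..int N}. Delta p f t)"

definition holderC :: "real \<Rightarrow> (real \<Rightarrow> 'b::real_normed_vector) \<Rightarrow> bool" where
  "holderC \<alpha> f = (continuous_on {0..1} f \<and>
     (\<exists>C. \<forall>p m. valid_index p m \<longrightarrow> 2 powr (real_of_int p * \<alpha>) * norm (scoeff f p m) \<le> C))"

text \<open>Integral against a Lipschitz path: int_0^t f dg = int_0^t f(s) g'(s) ds,
  where the product f(s) g'(s) is application of the linear map f(s) to g'(s).\<close>
definition int_dg :: "(real \<Rightarrow> ('a::euclidean_space \<Rightarrow>\<^sub>L real)) \<Rightarrow> (real \<Rightarrow> 'a) \<Rightarrow> real \<Rightarrow> real" where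
  "int_dg f g t = integral {0..t} (\<lambda>s. blinfun_apply (f s) (vector_derivative g (at s)))"

definition C2eps :: "real \<Rightarrow> ('a::euclidean_space \<Rightarrow> real) \<Rightarrow> ('a \<Rightarrow> ('a \<Rightarrow>\<^sub>L real)) \<Rightarrow> bool" where
  "C2eps \<epsilon> F DF = ((\<forall>x. (F has_derivative blinfun_apply (DF x)) (at x)) \<and>
     (\<exists>D2F :: 'a \<Rightarrow> ('a \<Rightarrow>\<^sub>L ('a \<Rightarrow>\<^sub>L real)).
        (\<forall>x. (DF has_derivative blinfun_apply (D2F x)) (at x)) \<and>
        continuous_on UNIV D2F \<and>
        (\<forall>x. \<exists>r>0. \<exists>C. \<forall>y\<in>ball x r. \<forall>z\<in>ball x r.
            norm (D2F y - D2F z) \<le> C * dist y z powr \<epsilon>)))"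

end

theory Submission
  imports Defs
begin


lemma deriv_local_affine:
  fixes f :: "real \<Rightarrow> 'b::real_normed_vector"
  assumes "open U" "x \<in> U" "\<And>y. y \<in> U \<Longrightarrow> f y = a + y *\<^sub>R c"
  shows "(f has_vector_derivative c) (at x)"
proof -
  have "((\<lambda>y. a + y *\<^sub>R c) has_vector_derivative (0 + c)) (at x)"
    by (intro has_vector_derivative_add has_vector_derivative_const)
       (use has_vector_derivative_scaleR[OF DERIV_ident has_vector_derivative_const] in simp)
  then have "((\<lambda>y. a + y *\<^sub>R c) has_vector_derivative c) (at x)" by simp
  then show ?thesis
    by (rule has_vector_derivative_transform_within_open[OF _ assms(1,2)]) (simp add: assms(3))
qed

lemma tpt_facts:
  assumes "m \<ge> 1"
  shows "tpt0 p m \<ge> 0" "tpt0 p m < tpt1 p m" "tpt1 p m < tpt2 p m"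
    "tpt0 p m + tpt2 p m = 2 * tpt1 p m"
proof -
  have m: "real m \<ge> 1" using assms by simp
  have p: "(2::real)^(p+1) = 2 * 2^p" by simp
  show "tpt0 p m \<ge> 0" using m by (simp add: tpt0_def)
  show "tpt0 p m < tpt1 p m" unfolding tpt0_def tpt1_def p using m by (simp add: divide_simps)
  show "tpt1 p m < tpt2 p m" unfolding tpt2_def tpt1_def p using m by (simp add: divide_simps)
  show "tpt0 p m + tpt2 p m = 2 * tpt1 p m" unfolding tpt0_def tpt1_def tpt2_def p by (simp add: divide_simps)
qed

definition hatf :: "nat \<Rightarrow> nat \<Rightarrow> real \<Rightarrow> real" where
  "hatf p m s = max 0 (min (2^p * (s - tpt0 p m)) (2^p * (tpt2 p m - s)))"

lemma hatf_out: "s \<le> tpt0 p m \<or> s \<ge> tpt2 p m \<Longrightarrow> hatf p m s = 0"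
proof -
  assume a: "s \<le> tpt0 p m \<or> s \<ge> tpt2 p m"
  have "(2::real)^p * (s - tpt0 p m) \<le> 0 \<or> (2::real)^p * (tpt2 p m - s) \<le> 0"
    using a by (auto intro: mult_nonneg_nonpos)
  then show ?thesis unfolding hatf_def by linarith
qed

lemma hatf_left: "m \<ge> 1 \<Longrightarrow> tpt0 p m \<le> s \<Longrightarrow> s \<le> tpt1 p m \<Longrightarrow> hatf p m s = 2^p * (s - tpt0 p m)"
proof -
  assume a: "m \<ge> 1" "tpt0 p m \<le> s" "s \<le> tpt1 p m"
  have "s - tpt0 p m \<le> tpt2 p m - s" using tpt_facts[OF a(1), of p] a by linarith
  then have "(2::real)^p * (s - tpt0 p m) \<le> 2^p * (tpt2 p m - s)" by simp
  moreover have "(2::real)^p * (s - tpt0 p m) \<ge> 0" using a by simp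
  ultimately show ?thesis unfolding hatf_def by linarith
qed

lemma hatf_right: "m \<ge> 1 \<Longrightarrow> tpt1 p m \<le> s \<Longrightarrow> s \<le> tpt2 p m \<Longrightarrow> hatf p m s = 2^p * (tpt2 p m - s)"
proof -
  assume a: "m \<ge> 1" "tpt1 p m \<le> s" "s \<le> tpt2 p m"
  have "s - tpt0 p m \<ge> tpt2 p m - s" using tpt_facts[OF a(1), of p] a by linarith
  then have "(2::real)^p * (s - tpt0 p m) \<ge> 2^p * (tpt2 p m - s)" by simp
  moreover have "(2::real)^p * (tpt2 p m - s) \<ge> 0" using a by simp
  ultimately show ?thesis unfolding hatf_def by linarith
qed

lemma schauder_hat:
  assumes m: "m \<ge> 1"
  shows "schauder (int p) m s = hatf p m s"
proof (cases "s < 0")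
  case True
  then have "{0..s} = {}" by auto
  moreover have "hatf p m s = 0" using hatf_out tpt_facts[OF m, of p] True by force
  ultimately show ?thesis by (simp add: schauder_def)
next
  case False
  note tf = tpt_facts[OF m, of p]
  have "(haar p m has_integral (hatf p m s - hatf p m 0)) {0..s}"
  proof (rule fundamental_theorem_of_calculus_strong[of "{tpt0 p m, tpt1 p m, tpt2 p m}"])
    show "0 \<le> s" using False by simp
    show "continuous_on {0..s} (hatf p m)" unfolding hatf_def
      by (intro continuous_intros)
    fix x assume x: "x \<in> {0..s} - {tpt0 p m, tpt1 p m, tpt2 p m}"
    have ne: "x \<noteq> tpt0 p m" "x \<noteq> tpt1 p m" "x \<noteq> tpt2 p m" using x by auto
    consider "x < tpt0 p m" | "tpt0 p m < x \<and> x < tpt1 p m" | "tpt1 p m < x \<and> x < tpt2 p m"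
      | "tpt2 p m < x" using ne tf(2,3) by (meson linorder_neqE_linordered_idom order.strict_trans)
    then show "(hatf p m has_vector_derivative haar p m x) (at x)"
    proof cases
      case 1
      have h: "haar p m x = 0" using 1 m tf by (simp add: haar_def)
      show ?thesis unfolding h
      proof (rule deriv_local_affine[where U="{..< tpt0 p m}" and a=0])
        fix y assume "y \<in> {..< tpt0 p m}"
        then show "hatf p m y = 0 + y *\<^sub>R 0" using hatf_out[of y p m] by simp
      qed (use 1 in auto)
    next
      case 2
      have h: "haar p m x = 2^p" using 2 m tf by (simp add: haar_def)
      show ?thesis unfolding h
      proof (rule deriv_local_affine[where U="{tpt0 p m <..< tpt1 p m}" and a="- (2^p * tpt0 p m)"])
        fix y assume "y \<in> {tpt0 p m <..< tpt1 p m}"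
        then show "hatf p m y = - (2^p * tpt0 p m) + y *\<^sub>R 2^p" using hatf_left[OF m, of p y]
          by (simp add: algebra_simps)
      qed (use 2 in auto)
    next
      case 3
      have h: "haar p m x = -(2^p)" using 3 m tf by (simp add: haar_def)
      show ?thesis unfolding h
      proof (rule deriv_local_affine[where U="{tpt1 p m <..< tpt2 p m}" and a="2^p * tpt2 p m"])
        fix y assume "y \<in> {tpt1 p m <..< tpt2 p m}"
        then show "hatf p m y = 2^p * tpt2 p m + y *\<^sub>R (-(2^p))" using hatf_right[OF m, of p y]
          by (simp add: algebra_simps)
      qed (use 3 in auto)
    next
      case 4
      have h: "haar p m x = 0" using 4 m tf by (simp add: haar_def)
      show ?thesis unfolding h
      proof (rule deriv_local_affine[where U="{tpt2 p m <..}" and a=0])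
        fix y assume "y \<in> {tpt2 p m <..}"
        then show "hatf p m y = 0 + y *\<^sub>R 0" using hatf_out[of y p m] by simp
      qed (use 4 in auto)
    qed
  qed simp
  moreover have "hatf p m 0 = 0" using hatf_out tf by force
  ultimately show ?thesis by (simp add: schauder_def integral_unique)
qed



lemma Delta_m1: "Delta (-1) f s = f 0"
  by (simp add: Delta_def schauder_def scoeff_def)

lemma SN_0: "SN 0 f s = f 0 + Delta 0 f s"
proof -
  have "{-1..int 0} = {-1, 0::int}" by auto
  then show ?thesis by (simp add: SN_def Delta_m1)
qed

lemma SN_Suc: "SN (Suc N) f s = SN N f s + Delta (int (Suc N)) f s"
proof -
  have "{-1..int (Suc N)} = insert (int (Suc N)) {-1..int N}" by auto
  then show ?thesis by (simp add: SN_def add.commute)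
qed

lemma Delta_0:
  assumes "0 \<le> s"
  shows "Delta 0 f s = s *\<^sub>R (f 1 - f 0) + hatf 0 1 s *\<^sub>R (2 *\<^sub>R f (1/2) - f 0 - f 1)"
proof -
  have h00: "haar 0 0 = (\<lambda>_. 1)" by (simp add: haar_def fun_eq_iff)
  have "integral {0..s} (\<lambda>_. 1::real) = s"
    using has_integral_const_real[of "1::real" 0 s] assms by (simp add: integral_unique)
  then have s00: "schauder 0 0 s = s" by (simp add: schauder_def h00)
  have s01: "schauder 0 (Suc 0) s = hatf 0 (Suc 0) s" using schauder_hat[of 1 0 s] by simp
  have t: "tpt0 0 (Suc 0) = 0" "tpt1 0 (Suc 0) = 1/2" "tpt2 0 (Suc 0) = 1" by (simp_all add: tpt0_def tpt1_def tpt2_def)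
  have "{0..(1::nat)} = {0,1}" by auto
  then show ?thesis
    by (simp add: Delta_def s00 s01 scoeff_def t)
qed

lemma Delta_pos:
  assumes p: "p \<ge> 1" and j: "j < 2^p" and s: "real j / 2^p \<le> s" "s \<le> real (j+1) / 2^p"
  shows "Delta (int p) f s = hatf p (j+1) s *\<^sub>R scoeff f (int p) (j+1)"
proof -
  have mem: "j+1 \<in> {0..2^p}" using j by simp
  have rest: "(\<Sum>m\<in>{0..2^p} - {j+1}. schauder (int p) m s *\<^sub>R scoeff f (int p) m) = 0"
  proof (rule sum.neutral, intro ballI)
    fix m assume m: "m \<in> {0..2^p} - {j+1}"
    show "schauder (int p) m s *\<^sub>R scoeff f (int p) m = 0"
    proof (cases "m = 0")
      case True
      then show ?thesis using p by (simp add: scoeff_def)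
    next
      case False
      then have m1: "m \<ge> 1" by simp
      have "hatf p m s = 0"
      proof (cases "m \<le> j")
        case True
        then have "real m / 2^p \<le> real j / 2^p" by (simp add: divide_right_mono)
        then show ?thesis using s by (intro hatf_out) (simp add: tpt2_def)
      next
        case False
        then have "m \<ge> j + 2" using m by auto
        then have "real (j+1) / 2^p \<le> (real m - 1) / 2^p" by (simp add: divide_right_mono)
        then show ?thesis using s by (intro hatf_out) (simp add: tpt0_def)
      qed
      then show ?thesis using schauder_hat[OF m1, of p s] by simp
    qed
  qed
  have "Delta (int p) f s = (\<Sum>m\<in>{0..2^p}. schauder (int p) m s *\<^sub>R scoeff f (int p) m)"
    by (simp add: Delta_def)
  also have "\<dots> = schauder (int p) (j+1) s *\<^sub>R scoeff f (int p) (j+1)"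
    using sum.remove[OF _ mem, of "\<lambda>m. schauder (int p) m s *\<^sub>R scoeff f (int p) m"] rest by simp
  also have "\<dots> = hatf p (j+1) s *\<^sub>R scoeff f (int p) (j+1)"
    using schauder_hat[of "j+1" p s] by simp
  finally show ?thesis .
qed

lemma scaleR_twice: "(t*2) *\<^sub>R x = t *\<^sub>R x + t *\<^sub>R (x::'b::real_vector)"
  by (metis scaleR_scaleR scaleR_2 scaleR_add_right)

lemma refine_left:
  fixes a b c :: "'b::real_vector"
  shows "a + t *\<^sub>R (c - a) + t *\<^sub>R (2 *\<^sub>R b - a - c) = a + (2*t) *\<^sub>R (b - a)"
  by (simp add: algebra_simps scaleR_twice)

lemma refine_right:
  fixes a b c :: "'b::real_vector"
  shows "a + t *\<^sub>R (c - a) + (1 - t) *\<^sub>R (2 *\<^sub>R b - a - c) = b + (2*t - 1) *\<^sub>R (c - b)"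
  by (simp add: algebra_simps scaleR_twice scaleR_2)



definition gp :: "nat \<Rightarrow> nat \<Rightarrow> real" where "gp N k = real k / 2^(N+1)"

lemma gp_mono: "a \<le> b \<Longrightarrow> gp N a \<le> gp N b"
  by (simp add: gp_def divide_right_mono)

lemma gp_nonneg: "gp N a \<ge> 0" by (simp add: gp_def)

lemma SN_interp:
  "k < 2^(N+1) \<Longrightarrow> gp N k \<le> s \<Longrightarrow> s \<le> gp N (Suc k) \<Longrightarrow>
   SN N f s = f (gp N k) + ((s - gp N k) * 2^(N+1)) *\<^sub>R (f (gp N (Suc k)) - f (gp N k))"
proof (induction N arbitrary: k s)
  case 0
  have s0: "0 \<le> s" using 0 gp_nonneg[of 0 k] by linarith
  have t: "tpt0 0 1 = 0" "tpt1 0 1 = 1/2" "tpt2 0 1 = 1" by (simp_all add: tpt0_def tpt1_def tpt2_def)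
  have SN: "SN 0 f s = f 0 + s *\<^sub>R (f 1 - f 0) + hatf 0 1 s *\<^sub>R (2 *\<^sub>R f (1/2) - f 0 - f 1)"
    using SN_0[of f s] Delta_0[OF s0, of f] by (simp add: add.assoc)
  have "k = 0 \<or> k = 1" using 0 by auto
  then show ?case
  proof
    assume k: "k = 0"
    have g: "gp 0 k = 0" "gp 0 (Suc k) = 1/2" using k by (simp_all add: gp_def)
    have "hatf 0 1 s = s" using hatf_left[of 1 0 s] t s0 0 g by simp
    then have "SN 0 f s = f 0 + (2 * s) *\<^sub>R (f (1/2) - f 0)"
      using SN refine_left[of "f 0" s "f 1" "f (1/2)"] by simp
    then show ?case unfolding g by (simp add: mult.commute)
  next
    assume k: "k = 1"
    have g: "gp 0 k = 1/2" "gp 0 (Suc k) = 1" using k by (simp_all add: gp_def)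
    have "hatf 0 1 s = 1 - s" using hatf_right[of 1 0 s] t s0 0 g by simp
    then have "SN 0 f s = f (1/2) + (2 * s - 1) *\<^sub>R (f 1 - f (1/2))"
      using SN refine_right[of "f 0" s "f 1" "f (1/2)"] by simp
    then show ?case unfolding g by (simp add: algebra_simps)
  qed
next
  case (Suc N)
  define j where "j = k div 2"
  have kj: "k = 2*j \<or> k = 2*j+1" unfolding j_def by presburger
  have jlt: "j < 2^(N+1)" using Suc.prems(1) unfolding j_def by simp
  have pw: "(2::real)^(Suc N + 1) = 2 * 2^(N+1)" by simp
  have g1: "gp (Suc N) (2*j) = gp N j" unfolding gp_def pw by simp
  have g2: "gp (Suc N) (2*j+2) = gp N (Suc j)" unfolding gp_def pw by (simp add: field_simps)
  have t0: "tpt0 (Suc N) (j+1) = gp N j" by (simp add: tpt0_def gp_def)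
  have t2: "tpt2 (Suc N) (j+1) = gp N (Suc j)" by (simp add: tpt2_def gp_def)
  have t1: "tpt1 (Suc N) (j+1) = gp (Suc N) (2*j+1)" by (simp add: tpt1_def gp_def)
  have lo: "gp N j \<le> s"
    using gp_mono[of "2*j" k "Suc N"] kj Suc.prems(2) g1 by auto
  have hi: "s \<le> gp N (Suc j)"
    using gp_mono[of "Suc k" "2*j+2" "Suc N"] kj Suc.prems(3) g2 by auto
  have IH: "SN N f s = f (gp N j) + ((s - gp N j) * 2^(N+1)) *\<^sub>R (f (gp N (Suc j)) - f (gp N j))"
    using Suc.IH[OF jlt lo hi] .
  have D: "Delta (int (Suc N)) f s = hatf (Suc N) (j+1) s *\<^sub>R
      (2 *\<^sub>R f (gp (Suc N) (2*j+1)) - f (gp N j) - f (gp N (Suc j)))"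
  proof -
    have "real j / 2^(Suc N) \<le> s" "s \<le> real (j+1) / 2^(Suc N)" using lo hi by (simp_all add: gp_def)
    then have DD: "Delta (int (Suc N)) f s = hatf (Suc N) (j+1) s *\<^sub>R scoeff f (int (Suc N)) (j+1)"
      using Delta_pos[of "Suc N" j s f] jlt by simp
    have nn: "nat (1 + int N) = Suc N" by simp
    have t': "tpt0 (Suc N) (Suc j) = gp N j" "tpt1 (Suc N) (Suc j) = gp (Suc N) (Suc (2*j))"
      "tpt2 (Suc N) (Suc j) = gp N (Suc j)" using t0 t1 t2 by simp_all
    have sc: "scoeff f (int (Suc N)) (j+1) = 2 *\<^sub>R f (gp (Suc N) (2*j+1)) - f (gp N j) - f (gp N (Suc j))"
      by (simp only: scoeff_def t0 t1 t2 nat_int) simp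
    show ?thesis unfolding sc[symmetric] by (rule DD)
  qed
  define t where "t = (s - gp N j) * 2^(N+1)"
  from kj show ?case
  proof
    assume k: "k = 2*j"
    have sm: "s \<le> tpt1 (Suc N) (j+1)" using Suc.prems(3) k t1 by simp
    have "hatf (Suc N) (j+1) s = t"
      using hatf_left[of "j+1" "Suc N" s] sm lo t0 unfolding t_def by (simp add: mult.commute)
    then have "SN (Suc N) f s = f (gp N j) + (2*t) *\<^sub>R (f (gp (Suc N) (2*j+1)) - f (gp N j))"
      using SN_Suc[of N f s] IH D refine_left[of "f (gp N j)" t "f (gp N (Suc j))" "f (gp (Suc N) (2*j+1))"]
      unfolding t_def by simp
    moreover have "2*t = (s - gp (Suc N) k) * 2^(Suc N + 1)"
      unfolding t_def k g1 pw by simp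
    ultimately show ?case using k g1 by simp
  next
    assume k: "k = 2*j+1"
    have sm: "tpt1 (Suc N) (j+1) \<le> s" using Suc.prems(2) k t1 by simp
    have "hatf (Suc N) (j+1) s = 2^(Suc N) * (gp N (Suc j) - s)"
      using hatf_right[of "j+1" "Suc N" s] sm hi t2 by simp
    also have "\<dots> = 1 - t" unfolding t_def gp_def by (simp add: field_simps)
    finally have "hatf (Suc N) (j+1) s = 1 - t" .
    then have "SN (Suc N) f s = f (gp (Suc N) (2*j+1)) + (2*t - 1) *\<^sub>R (f (gp N (Suc j)) - f (gp (Suc N) (2*j+1)))"
      using SN_Suc[of N f s] IH D refine_right[of "f (gp N j)" t "f (gp N (Suc j))" "f (gp (Suc N) (2*j+1))"]
      unfolding t_def by simp
    moreover have "2*t - 1 = (s - gp (Suc N) k) * 2^(Suc N + 1)"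
      unfolding t_def k pw by (simp add: gp_def field_simps)
    moreover have "Suc k = 2*j+2" using k by simp
    ultimately show ?case using k g2 by simp
  qed
qed



lemma half_twice: "(1/2::real) *\<^sub>R x + (1/2) *\<^sub>R x = (x::'b::real_vector)"
  by (metis scaleR_add_left field_sum_of_halves scaleR_one)

lemma holder_incr:
  fixes v :: "real \<Rightarrow> 'b::real_normed_vector"
  assumes a0: "0 < \<alpha>" and a1: "\<alpha> < 1" and hv: "holderC \<alpha> v"
  obtains K where "K \<ge> 0"
    "\<And>p j. j < 2^p \<Longrightarrow> norm (v (real (Suc j) / 2^p) - v (real j / 2^p)) \<le> K * (2 powr (-\<alpha>))^p"
proof -
  obtain C where C: "\<And>p m. valid_index p m \<Longrightarrow> 2 powr (real_of_int p * \<alpha>) * norm (scoeff v p m) \<le> C"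
    using hv unfolding holderC_def by blast
  define q where "q = (2::real) powr (-\<alpha>)"
  have q0: "q > 0" unfolding q_def by simp
  have q1: "q < 1" unfolding q_def using a0 by (simp add: powr_less_one)
  have qh: "q > 1/2"
  proof -
    have "(2::real) powr (-1) < 2 powr (-\<alpha>)" using a1 by (intro powr_less_mono) auto
    then show ?thesis unfolding q_def by (simp add: powr_minus)
  qed
  have coef: "norm (scoeff v (int p) m) \<le> C * q^p" if "m \<le> 2^p" for p m
  proof -
    have vi: "valid_index (int p) m" using that by (simp add: valid_index_def)
    have e: "q^p * 2 powr (real p * \<alpha>) = 1"
      unfolding q_def powr_power[of 2, simplified] by (simp add: powr_add[symmetric])
    have "norm (scoeff v (int p) m) = q^p * (2 powr (real p * \<alpha>) * norm (scoeff v (int p) m))"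
      using e by (simp add: mult.assoc[symmetric])
    also have "\<dots> \<le> q^p * C" using C[OF vi] q0 by (intro mult_left_mono) auto
    finally show ?thesis by (simp add: mult.commute)
  qed
  have C0: "C \<ge> 0"
    using C[of 0 0] by (simp add: valid_index_def) (metis norm_ge_zero order.trans)
  define K where "K = C / (2*q - 1)"
  have K0: "K \<ge> 0" unfolding K_def using C0 qh by simp
  have KC: "K * (2*q - 1) = C" unfolding K_def using qh by simp
  have CK: "C \<le> K"
  proof -
    have "K * (2*q - 1) \<le> K * 1" using K0 q1 by (intro mult_left_mono) auto
    then show ?thesis using KC by simp
  qed
  have main: "\<forall>j < 2^p. norm (v (real (Suc j) / 2^p) - v (real j / 2^p)) \<le> K * q^p" for p
  proof (induction p)
    case 0
    have "norm (v 1 - v 0) \<le> C" using coef[of 0 0] by (simp add: scoeff_def)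
    then show ?case using CK by simp
  next
    case (Suc p)
    show ?case
    proof (intro allI impI)
      fix j :: nat assume j: "j < 2^Suc p"
      define i where "i = j div 2"
      have ij: "j = 2*i \<or> j = 2*i+1" unfolding i_def by presburger
      have ilt: "i < 2^p" using j unfolding i_def by simp
      define a where "a = v (real i / 2^p)"
      define b where "b = v (real (2*i+1) / 2^Suc p)"
      define c where "c = v (real (Suc i) / 2^p)"
      have e: "scoeff v (int p) (Suc i) = 2 *\<^sub>R b - a - c"
        unfolding scoeff_def a_def b_def c_def tpt0_def tpt1_def tpt2_def by simp
      have ne: "norm (2 *\<^sub>R b - a - c) \<le> C * q^p" using coef[of "Suc i" p] ilt e by simp
      have nac: "norm (c - a) \<le> K * q^p" using Suc.IH ilt unfolding a_def c_def by simp
      have pw: "(2::real)^Suc p = 2 * 2^p" by simp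
      have fin: "(K * q^p + C * q^p) / 2 \<le> K * q^Suc p"
      proof -
        have "K * q^p + C * q^p = (K + C) * q^p" by (simp add: algebra_simps)
        also have "K + C = 2 * (K * q)" using KC by (simp add: algebra_simps)
        finally show ?thesis by simp
      qed
      from ij show "norm (v (real (Suc j) / 2^Suc p) - v (real j / 2^Suc p)) \<le> K * q^Suc p"
      proof
        assume jj: "j = 2*i"
        have "v (real j / 2^Suc p) = a" unfolding a_def jj pw by simp
        moreover have "v (real (Suc j) / 2^Suc p) = b" unfolding b_def jj by simp
        moreover have "b - a = (1/2) *\<^sub>R ((c - a) + (2 *\<^sub>R b - a - c))" by (simp add: algebra_simps half_twice)
        moreover have "norm ((1/2::real) *\<^sub>R ((c - a) + (2 *\<^sub>R b - a - c))) \<le> (K * q^p + C * q^p) / 2"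
          using norm_triangle_le[OF add_mono[OF nac ne]] by simp
        ultimately show ?thesis using fin by simp
      next
        assume jj: "j = 2*i+1"
        have "v (real j / 2^Suc p) = b" unfolding b_def jj by simp
        moreover have "real (Suc j) / 2^Suc p = real (Suc i) / 2^p" unfolding jj pw by (simp add: field_simps)
        then have "v (real (Suc j) / 2^Suc p) = c" unfolding c_def by simp
        moreover have "c - b = (1/2) *\<^sub>R ((c - a) - (2 *\<^sub>R b - a - c))" by (simp add: algebra_simps half_twice)
        moreover have "norm ((1/2::real) *\<^sub>R ((c - a) - (2 *\<^sub>R b - a - c))) \<le> (K * q^p + C * q^p) / 2"
          using norm_triangle_le_diff[OF add_mono[OF nac ne]] by simp
        ultimately show ?thesis using fin by simp
      qed
    qed
  qed
  show ?thesis using that[OF K0] main unfolding q_def by blast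
qed



lemma unif_holder:
  fixes D :: "'a::metric_space \<Rightarrow> 'b::real_normed_vector"
  assumes S: "compact S"
    and loc: "\<And>x. \<exists>r>0. \<exists>C. \<forall>y\<in>ball x r. \<forall>z\<in>ball x r. norm (D y - D z) \<le> C * dist y z powr \<epsilon>"
  obtains e C where "e > 0" "C \<ge> 0" "\<And>y z. y \<in> S \<Longrightarrow> dist y z < e \<Longrightarrow> norm (D y - D z) \<le> C * dist y z powr \<epsilon>"
proof -
  obtain rr CC where rr: "\<And>x. rr x > 0"
    and CC: "\<And>x y z. y\<in>ball x (rr x) \<Longrightarrow> z\<in>ball x (rr x) \<Longrightarrow> norm (D y - D z) \<le> CC x * dist y z powr \<epsilon>"
    using loc by metis
  have cov: "S \<subseteq> (\<Union>x\<in>S. ball x (rr x))" using rr by force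
  obtain T where T: "T \<subseteq> S" "finite T" "S \<subseteq> (\<Union>x\<in>T. ball x (rr x))"
    using compactE_image[OF S _ cov] by blast
  obtain e where e: "e > 0" "\<And>y. y \<in> S \<Longrightarrow> \<exists>G \<in> (\<lambda>x. ball x (rr x)) ` T. ball y e \<subseteq> G"
    using Heine_Borel_lemma[OF S, of "(\<lambda>x. ball x (rr x)) ` T"] T(3) by auto
  define C where "C = (\<Sum>x\<in>T. \<bar>CC x\<bar>)"
  have C0: "C \<ge> 0" unfolding C_def by (simp add: sum_nonneg)
  show ?thesis
  proof (rule that[OF e(1) C0])
    fix y z assume y: "y \<in> S" and yz: "dist y z < e"
    obtain x where x: "x \<in> T" "ball y e \<subseteq> ball x (rr x)" using e(2)[OF y] by blast
    have yy: "y \<in> ball y e" and zz: "z \<in> ball y e" using e(1) yz by auto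
    have "y \<in> ball x (rr x)" using x(2) yy by (rule subsetD)
    moreover have "z \<in> ball x (rr x)" using x(2) zz by (rule subsetD)
    ultimately
    have "norm (D y - D z) \<le> CC x * dist y z powr \<epsilon>" by (rule CC)
    also have "\<dots> \<le> C * dist y z powr \<epsilon>"
    proof (rule mult_right_mono)
      have "CC x \<le> \<bar>CC x\<bar>" by simp
      also have "\<dots> \<le> C" unfolding C_def using x(1) T(2)
        by (intro member_le_sum) auto
      finally show "CC x \<le> C" .
    qed simp
    finally show "norm (D y - D z) \<le> C * dist y z powr \<epsilon>" .
  qed
qed

lemma trapezoid:
  fixes F :: "'a::real_normed_vector \<Rightarrow> real" and DF :: "'a \<Rightarrow> ('a \<Rightarrow>\<^sub>L real)"
    and D2 :: "'a \<Rightarrow> ('a \<Rightarrow>\<^sub>L ('a \<Rightarrow>\<^sub>L real))"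
  assumes dF: "\<And>x. (F has_derivative blinfun_apply (DF x)) (at x)"
    and dDF: "\<And>x. (DF has_derivative blinfun_apply (D2 x)) (at x)"
    and hol: "\<And>r. 0 \<le> r \<Longrightarrow> r \<le> 1 \<Longrightarrow> norm (D2 (x0 + r *\<^sub>R d) - D2 x0) \<le> B"
  shows "\<bar>F (x0 + d) - F x0 - (DF x0 d + DF (x0 + d) d) / 2\<bar> \<le> 2 * B * norm d ^ 2"
proof -
  define f where "f r = F (x0 + r *\<^sub>R d)" for r
  define \<phi> where "\<phi> r = DF (x0 + r *\<^sub>R d) d" for r
  define \<phi>' where "\<phi>' r = D2 (x0 + r *\<^sub>R d) d d" for r
  have line: "((\<lambda>r. x0 + r *\<^sub>R d) has_derivative (\<lambda>h. h *\<^sub>R d)) (at r)" for r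
    by (auto intro!: derivative_eq_intros)
  have df: "(f has_real_derivative \<phi> r) (at r)" for r
  proof -
    have "(f has_derivative (\<lambda>h. DF (x0 + r *\<^sub>R d) (h *\<^sub>R d))) (at r)"
      unfolding f_def by (rule has_derivative_compose[OF line dF])
    moreover have "(\<lambda>h. DF (x0 + r *\<^sub>R d) (h *\<^sub>R d)) = (*) (\<phi> r)"
      by (auto simp: fun_eq_iff blinfun.scaleR_right \<phi>_def)
    ultimately show ?thesis unfolding has_field_derivative_def by simp
  qed
  have dphi: "(\<phi> has_real_derivative \<phi>' r) (at r)" for r
  proof -
    have "((\<lambda>r. DF (x0 + r *\<^sub>R d)) has_derivative (\<lambda>h. D2 (x0 + r *\<^sub>R d) (h *\<^sub>R d))) (at r)"
      by (rule has_derivative_compose[OF line dDF])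
    then have "((\<lambda>r. blinfun_apply (DF (x0 + r *\<^sub>R d)) d) has_derivative
        (\<lambda>h. blinfun_apply (D2 (x0 + r *\<^sub>R d) (h *\<^sub>R d)) d)) (at r)"
      by (rule bounded_linear.has_derivative[OF blinfun.bounded_linear_left])
    moreover have "(\<lambda>h. blinfun_apply (D2 (x0 + r *\<^sub>R d) (h *\<^sub>R d)) d) = (*) (\<phi>' r)"
      by (auto simp: fun_eq_iff blinfun.scaleR_right blinfun.scaleR_left \<phi>'_def)
    ultimately show ?thesis unfolding has_field_derivative_def \<phi>_def by simp
  qed
  define c where "c = \<phi>' 0"
  define B' where "B' = B * norm d ^ 2"
  have pb: "\<bar>\<phi>' r - c\<bar> \<le> B'" if "0 \<le> r" "r \<le> 1" for r
  proof -
    have "\<phi>' r - c = (D2 (x0 + r *\<^sub>R d) - D2 x0) d d"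
      unfolding \<phi>'_def c_def by (simp add: blinfun.diff_left)
    also have "\<bar>\<dots>\<bar> \<le> norm (D2 (x0 + r *\<^sub>R d) - D2 x0) * norm d * norm d"
    proof -
      let ?L = "D2 (x0 + r *\<^sub>R d) - D2 x0"
      have "\<bar>?L d d\<bar> \<le> norm (?L d) * norm d" using norm_blinfun[of "?L d" d] by simp
      also have "\<dots> \<le> norm ?L * norm d * norm d"
        using norm_blinfun[of ?L d] by (intro mult_right_mono) auto
      finally show ?thesis .
    qed
    also have "\<dots> \<le> B * norm d * norm d"
      using hol[OF that] by (intro mult_right_mono) auto
    finally show ?thesis unfolding B'_def by (simp add: power2_eq_square mult.assoc)
  qed
  define \<psi> where "\<psi> r = \<phi> r - \<phi> 0 - r * c" for r
  have dpsi: "(\<psi> has_real_derivative (\<phi>' r - c)) (at r)" for r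
    unfolding \<psi>_def by (auto intro!: derivative_eq_intros dphi)
  have psib: "\<bar>\<psi> r\<bar> \<le> B'" if "0 \<le> r" "r \<le> 1" for r
  proof (cases "r = 0")
    case True
    then show ?thesis using pb[of 0] by (simp add: \<psi>_def)
  next
    case False
    then have "0 < r" using that by simp
    from MVT2[OF this, of \<psi> "\<lambda>r. \<phi>' r - c"] dpsi
    obtain z where z: "0 < z" "z < r" "\<psi> r - \<psi> 0 = (r - 0) * (\<phi>' z - c)" by blast
    have "\<bar>\<psi> r\<bar> = r * \<bar>\<phi>' z - c\<bar>" using z(3) \<open>0 < r\<close> by (simp add: \<psi>_def abs_mult)
    also have "\<dots> \<le> 1 * B'" using pb[of z] z that \<open>0 < r\<close>
      by (intro mult_mono) auto
    finally show ?thesis by simp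
  qed
  define w where "w r = f r - f 0 - r * \<phi> 0 - r^2 / 2 * c" for r
  have dw: "(w has_real_derivative \<psi> r) (at r)" for r
    unfolding w_def \<psi>_def by (auto intro!: derivative_eq_intros df simp: power2_eq_square)
  obtain z where z: "0 < z" "z < 1" "w 1 - w 0 = (1 - 0) * \<psi> z"
    using MVT2[of 0 1 w \<psi>] dw by auto
  have wb: "\<bar>f 1 - f 0 - \<phi> 0 - c / 2\<bar> \<le> B'"
    using z psib[of z] by (simp add: w_def)
  have pb1: "\<bar>\<phi> 1 - \<phi> 0 - c\<bar> \<le> B'" using psib[of 1] by (simp add: \<psi>_def)
  have "\<bar>f 1 - f 0 - (\<phi> 0 + \<phi> 1) / 2\<bar> \<le> 2 * B'"
  proof -
    have eq: "f 1 - f 0 - (\<phi> 0 + \<phi> 1) / 2 = (f 1 - f 0 - \<phi> 0 - c / 2) - (\<phi> 1 - \<phi> 0 - c) / 2"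
      by (simp add: field_simps)
    have B0: "B' \<ge> 0" using pb1 by linarith
    show ?thesis unfolding eq
      using abs_le_D1[OF wb] abs_le_D2[OF wb] abs_le_D1[OF pb1] abs_le_D2[OF pb1] B0
      by (intro abs_leI) argo+
  qed
  then show ?thesis unfolding f_def \<phi>_def B'_def by simp
qed



lemma interval_integral:
  fixes v :: "real \<Rightarrow> 'a::euclidean_space" and g :: "real \<Rightarrow> ('a \<Rightarrow>\<^sub>L real)"
  assumes k: "k < 2^(N+1)" and c: "gp N k \<le> c" "c \<le> gp N (Suc k)"
  shows "((\<lambda>s. blinfun_apply (SN N g s) (vector_derivative (SN N v) (at s))) has_integral
     (((c - gp N k) * 2^(N+1)) * g (gp N k) (v (gp N (Suc k)) - v (gp N k))
      + ((c - gp N k) * 2^(N+1))^2 / 2 * (g (gp N (Suc k)) - g (gp N k)) (v (gp N (Suc k)) - v (gp N k))))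
     {gp N k..c}"
proof -
  define a where "a = gp N k"
  define b where "b = gp N (Suc k)"
  define n :: real where "n = 2^(N+1)"
  define dv where "dv = v b - v a"
  define A where "A = g a dv"
  define Bv where "Bv = (g b - g a) dv"
  define \<Phi> where "\<Phi> s = ((s - a) * n) * A + ((s - a) * n)^2 / 2 * Bv" for s
  have ab: "a < b" unfolding a_def b_def gp_def by (simp add: divide_strict_right_mono)
  have "((\<lambda>s. blinfun_apply (SN N g s) (vector_derivative (SN N v) (at s))) has_integral (\<Phi> c - \<Phi> a)) {a..c}"
  proof (rule fundamental_theorem_of_calculus_strong[of "{a, b}"])
    show "a \<le> c" using c unfolding a_def by simp
    show "continuous_on {a..c} \<Phi>" unfolding \<Phi>_def by (intro continuous_intros) auto
    fix x assume x: "x \<in> {a..c} - {a, b}"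
    then have xab: "a < x" "x < b" using c unfolding b_def by auto
    have SNg: "SN N g x = g a + ((x - a) * n) *\<^sub>R (g b - g a)"
      using SN_interp[OF k, of x g] xab unfolding a_def b_def n_def by simp
    have SNv: "SN N v y = (v a - (a * n) *\<^sub>R dv) + y *\<^sub>R (n *\<^sub>R dv)" if "y \<in> {a<..<b}" for y
    proof -
      have "SN N v y = v a + ((y - a) * n) *\<^sub>R dv"
        using SN_interp[OF k, of y v] that unfolding a_def b_def n_def dv_def by simp
      then show ?thesis by (simp add: algebra_simps)
    qed
    have "(SN N v has_vector_derivative (n *\<^sub>R dv)) (at x)"
      by (rule deriv_local_affine[of "{a<..<b}"]) (use xab SNv in auto)
    then have VD: "vector_derivative (SN N v) (at x) = n *\<^sub>R dv"
      by (rule vector_derivative_at)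
    have iota: "blinfun_apply (SN N g x) (vector_derivative (SN N v) (at x)) = n * A + ((x - a) * n) * n * Bv"
      unfolding SNg VD A_def Bv_def
      by (simp only: blinfun.add_left blinfun.scaleR_left blinfun.scaleR_right real_scaleR_def)
         (simp add: algebra_simps)
    have "(\<Phi> has_real_derivative (n * A + ((x - a) * n) * n * Bv)) (at x)"
      unfolding \<Phi>_def by (auto intro!: derivative_eq_intros simp: power2_eq_square)
    then show "(\<Phi> has_vector_derivative blinfun_apply (SN N g x) (vector_derivative (SN N v) (at x))) (at x)"
      unfolding iota has_real_derivative_iff_has_vector_derivative .
  qed simp
  moreover have "\<Phi> a = 0" unfolding \<Phi>_def by simp
  ultimately show ?thesis unfolding \<Phi>_def a_def b_def n_def dv_def A_def Bv_def by simp
qed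

lemma cum_integral:
  fixes v :: "real \<Rightarrow> 'a::euclidean_space" and g :: "real \<Rightarrow> ('a \<Rightarrow>\<^sub>L real)"
  assumes "K \<le> 2^(N+1)"
  shows "((\<lambda>s. blinfun_apply (SN N g s) (vector_derivative (SN N v) (at s))) has_integral
     (\<Sum>k<K. g (gp N k) (v (gp N (Suc k)) - v (gp N k))
      + (g (gp N (Suc k)) - g (gp N k)) (v (gp N (Suc k)) - v (gp N k)) / 2)) {0..gp N K}"
  using assms
proof (induction K)
  case 0
  show ?case by (simp add: gp_def has_integral_refl(2))
next
  case (Suc K)
  have k: "K < 2^(N+1)" using Suc.prems by simp
  have one: "(gp N (Suc K) - gp N K) * (2 * 2^N) = 1" by (simp add: gp_def field_simps)
  have I: "((\<lambda>s. blinfun_apply (SN N g s) (vector_derivative (SN N v) (at s))) has_integral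
     (g (gp N K) (v (gp N (Suc K)) - v (gp N K))
      + (g (gp N (Suc K)) - g (gp N K)) (v (gp N (Suc K)) - v (gp N K)) / 2)) {gp N K..gp N (Suc K)}"
    using interval_integral[OF k gp_mono[of K "Suc K" N] order.refl, of g v] by (simp add: one)
  show ?case
    using has_integral_combine[OF gp_nonneg gp_mono[of K "Suc K" N] Suc.IH[OF less_imp_le[OF k]] I]
    by (simp add: add.commute)
qed



lemma rho_lt1:
  assumes "(2 + \<epsilon>) * \<alpha> > 1"
  shows "2 * (2 powr (-\<alpha>)) powr \<epsilon> * (2 powr (-\<alpha>))^2 < (1::real)"
proof -
  have "2 * (2 powr (-\<alpha>)) powr \<epsilon> * (2 powr (-\<alpha>))^2 = (2::real) powr (1 + (-\<alpha> * \<epsilon>) + (-\<alpha> + -\<alpha>))"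
  proof -
    have e1: "(2 powr (-\<alpha>)) powr \<epsilon> = (2::real) powr (-\<alpha>*\<epsilon>)" by (simp add: powr_powr)
    have e2: "(2 powr (-\<alpha>))^2 = (2::real) powr (-\<alpha>) * 2 powr (-\<alpha>)" by (simp add: power2_eq_square)
    have e3: "(2::real) powr (1 + (-\<alpha> * \<epsilon>) + (-\<alpha> + -\<alpha>)) = 2 powr 1 * 2 powr (-\<alpha>*\<epsilon>) * (2 powr (-\<alpha>) * 2 powr (-\<alpha>))"
      by (simp only: powr_add)
    show ?thesis unfolding e1 e2 e3 by simp
  qed
  also have "\<dots> < 1" using assms by (intro powr_less_one) (auto simp: algebra_simps)
  finally show ?thesis .
qed

lemma scale_eq:
  fixes q K0 :: real
  assumes "q > 0" "K0 \<ge> 0"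
  shows "2^m * ((K0 * q^m) powr \<epsilon> * (K0 * q^m)^2) = K0 powr \<epsilon> * K0^2 * (2 * q powr \<epsilon> * q^2)^m"
proof -
  have a: "(q^m) powr \<epsilon> = (q powr \<epsilon>)^m"
    using assms(1) by (simp add: powr_realpow[symmetric] powr_powr powr_power mult.commute)
  have b: "(q^m)^2 = (q^2)^m" by (metis power_mult mult.commute)
  show ?thesis
    by (simp add: powr_mult a b power_mult_distrib)
qed



theorem mainTheorem14:
  fixes \<alpha> \<epsilon> :: real
    and v :: "real \<Rightarrow> 'a::euclidean_space"
    and F :: "'a \<Rightarrow> real"
    and DF :: "'a \<Rightarrow> ('a \<Rightarrow>\<^sub>L real)"
  assumes "1/3 < \<alpha>" and "\<alpha> < 1"
    and "holderC \<alpha> v"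
    and "\<epsilon> > 0" and "(2 + \<epsilon>) * \<alpha> > 1"
    and "C2eps \<epsilon> F DF"
  shows "\<forall>t\<in>{0..1}.
           (\<lambda>N. int_dg (SN N (\<lambda>s. DF (v s))) (SN N v) t) \<longlonglongrightarrow> F (v t) - F (v 0)"
proof (intro ballI)
  fix t :: real assume t: "t \<in> {0..1}"
  have a0: "0 < \<alpha>" using assms(1) by simp
  obtain D2F where dF: "\<And>x. (F has_derivative blinfun_apply (DF x)) (at x)"
    and dDF: "\<And>x. (DF has_derivative blinfun_apply (D2F x)) (at x)"
    and loc: "\<And>x. \<exists>r>0. \<exists>C. \<forall>y\<in>ball x r. \<forall>z\<in>ball x r. norm (D2F y - D2F z) \<le> C * dist y z powr \<epsilon>"
    using assms(6) unfolding C2eps_def by blast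
  have vcont: "continuous_on {0..1} v" using assms(3) by (simp add: holderC_def)
  define q where "q = (2::real) powr (-\<alpha>)"
  obtain K0 where K0: "K0 \<ge> 0"
    and incr: "\<And>p j. j < 2^p \<Longrightarrow> norm (v (real (Suc j) / 2^p) - v (real j / 2^p)) \<le> K0 * q^p"
    using holder_incr[OF a0 assms(2,3)] unfolding q_def by blast
  have q0: "q > 0" unfolding q_def by simp
  have q1: "q < 1" unfolding q_def using a0 by (simp add: powr_less_one)
  define S where "S = v ` {0..1}"
  have Sc: "compact S" unfolding S_def by (intro compact_continuous_image vcont compact_Icc)
  obtain e Ch where e: "e > 0" and Ch: "Ch \<ge> 0"
    and hol: "\<And>y z. y \<in> S \<Longrightarrow> dist y z < e \<Longrightarrow> norm (D2F y - D2F z) \<le> Ch * dist y z powr \<epsilon>"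
    using unif_holder[OF Sc loc] by blast
  have DFc: "continuous_on UNIV DF"
    using dDF by (meson continuous_at_imp_continuous_on has_derivative_continuous)
  have Fc: "continuous_on UNIV F"
    using dF by (meson continuous_at_imp_continuous_on has_derivative_continuous)
  have "compact (DF ` S)" using Sc DFc by (intro compact_continuous_image) (auto intro: continuous_on_subset)
  then obtain G where G0: "G > 0" and Gb: "\<And>y. y \<in> DF ` S \<Longrightarrow> norm y \<le> G"
    using compact_imp_bounded bounded_pos by metis
  have G: "norm (DF (v s)) \<le> G" if "s \<in> {0..1}" for s
    using Gb that unfolding S_def by blast
  have FVc: "continuous_on {0..1} (\<lambda>s. F (v s))"
    using continuous_on_compose2[OF Fc vcont] by simp

  define \<delta> where "\<delta> N = K0 * q^(N+1)" for N
  define dv where "dv N k = v (gp N (Suc k)) - v (gp N k)" for N k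
  define KK where "KK N = nat \<lfloor>t * 2^(N+1)\<rfloor>" for N
  define T where "T N k = DF (v (gp N k)) (dv N k) + (DF (v (gp N (Suc k))) - DF (v (gp N k))) (dv N k) / 2" for N k
  define P where "P N = (if KK N < 2^(N+1) then
     ((t - gp N (KK N)) * 2^(N+1)) * DF (v (gp N (KK N))) (dv N (KK N))
      + ((t - gp N (KK N)) * 2^(N+1))^2 / 2 * (DF (v (gp N (Suc (KK N)))) - DF (v (gp N (KK N)))) (dv N (KK N))
     else 0)" for N

  have dvb: "norm (dv N k) \<le> \<delta> N" if "k < 2^(N+1)" for N k
    using incr[OF that] unfolding dv_def gp_def \<delta>_def by simp
  have gp01: "gp N k \<in> {0..1}" if "k \<le> 2^(N+1)" for N k
  proof -
    have "real k \<le> 2^(N+1)" using that by (metis of_nat_le_iff of_nat_numeral of_nat_power)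
    then show ?thesis by (simp add: gp_def)
  qed
  have KKf: "KK N \<le> 2^(N+1) \<and> gp N (KK N) \<le> t \<and> t \<le> gp N (Suc (KK N)) \<and>
      (KK N = 2^(N+1) \<longrightarrow> t = gp N (KK N)) \<and> t - gp N (KK N) \<le> 1 / 2^(N+1)" for N
  proof -
    define x where "x = t * 2^(N+1)"
    have x0: "0 \<le> x" "x \<le> 2^(N+1)" using t unfolding x_def by auto
    have rK: "real (KK N) = of_int \<lfloor>x\<rfloor>" unfolding KK_def x_def using x0(1) x_def by simp
    have f1: "real (KK N) \<le> x" "x < real (KK N) + 1" unfolding rK by linarith+
    have le: "KK N \<le> 2^(N+1)"
    proof -
      have "real (KK N) \<le> 2^(N+1)" using f1 x0 by linarith
      then show ?thesis by (metis of_nat_le_iff of_nat_numeral of_nat_power)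
    qed
    have p: "(2::real)^(N+1) > 0" by simp
    have g1: "gp N (KK N) \<le> t" using f1 p unfolding gp_def x_def by (simp add: divide_le_eq)
    have g2: "t \<le> gp N (Suc (KK N))" using f1 p unfolding gp_def x_def by (simp add: le_divide_eq)
    have g3: "KK N = 2^(N+1) \<longrightarrow> t = gp N (KK N)"
    proof
      assume "KK N = 2^(N+1)"
      then have "real (KK N) = 2^(N+1)" by simp
      then show "t = gp N (KK N)" using f1 x0 t p unfolding gp_def x_def by simp
    qed
    have "gp N (Suc (KK N)) = gp N (KK N) + 1 / 2^(N+1)" unfolding gp_def by (simp add: add_divide_distrib)
    then have g4: "t - gp N (KK N) \<le> 1 / 2^(N+1)" using g2 by linarith
    show ?thesis using le g1 g2 g3 g4 by blast
  qed

  have intid: "int_dg (SN N (\<lambda>s. DF (v s))) (SN N v) t = (\<Sum>k<KK N. T N k) + P N" for N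
  proof -
    have cum: "((\<lambda>s. blinfun_apply (SN N (\<lambda>s. DF (v s)) s) (vector_derivative (SN N v) (at s))) has_integral
        (\<Sum>k<KK N. T N k)) {0..gp N (KK N)}"
      using cum_integral[of "KK N" N "\<lambda>s. DF (v s)" v] KKf[of N] unfolding T_def dv_def by simp
    show ?thesis
    proof (cases "KK N < 2^(N+1)")
      case True
      have I: "((\<lambda>s. blinfun_apply (SN N (\<lambda>s. DF (v s)) s) (vector_derivative (SN N v) (at s))) has_integral
          P N) {gp N (KK N)..t}"
        using interval_integral[OF True, of t "\<lambda>s. DF (v s)" v] KKf[of N] True
        unfolding P_def dv_def by simp
      show ?thesis unfolding int_dg_def
        using has_integral_combine[OF gp_nonneg _ cum I] KKf[of N] by (simp add: integral_unique)
    next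
      case False
      then have "KK N = 2^(N+1)" using KKf[of N] by simp
      then have "t = gp N (KK N)" using KKf[of N] by simp
      then show ?thesis unfolding int_dg_def using cum False
        by (simp add: integral_unique P_def)
    qed
  qed

  have errid: "int_dg (SN N (\<lambda>s. DF (v s))) (SN N v) t - (F (v t) - F (v 0)) =
      (\<Sum>k<KK N. T N k - (F (v (gp N (Suc k))) - F (v (gp N k)))) + P N - (F (v t) - F (v (gp N (KK N))))" for N
  proof -
    have "(\<Sum>k<KK N. F (v (gp N (Suc k))) - F (v (gp N k))) = F (v (gp N (KK N))) - F (v (gp N 0))"
      by (rule sum_lessThan_telescope)
    moreover have "gp N 0 = 0" by (simp add: gp_def)
    ultimately show ?thesis unfolding intid by (simp add: sum_subtractf)
  qed

  define bnd where "bnd N = 2^(N+1) * (2 * (Ch * \<delta> N powr \<epsilon>) * \<delta> N ^ 2) + 2 * G * \<delta> N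
      + \<bar>F (v t) - F (v (gp N (KK N)))\<bar>" for N

  have trap: "\<bar>T N k - (F (v (gp N (Suc k))) - F (v (gp N k)))\<bar> \<le> 2 * (Ch * \<delta> N powr \<epsilon>) * \<delta> N ^ 2"
    if k: "k < 2^(N+1)" and de: "\<delta> N < e" for N k
  proof -
    define x0 where "x0 = v (gp N k)"
    define d where "d = dv N k"
    have x0S: "x0 \<in> S" unfolding x0_def S_def using gp01[of k N] k by auto
    have nd: "norm d \<le> \<delta> N" unfolding d_def using dvb[OF k] .
    have h: "norm (D2F (x0 + r *\<^sub>R d) - D2F x0) \<le> Ch * \<delta> N powr \<epsilon>" if r: "0 \<le> r" "r \<le> 1" for r
    proof -
      have dist: "dist x0 (x0 + r *\<^sub>R d) = r * norm d" using r by (simp add: dist_norm)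
      have "r * norm d \<le> norm d" using r by (simp add: mult_left_le_one_le)
      then have dl: "dist x0 (x0 + r *\<^sub>R d) \<le> \<delta> N" using nd dist by linarith
      have "norm (D2F x0 - D2F (x0 + r *\<^sub>R d)) \<le> Ch * dist x0 (x0 + r *\<^sub>R d) powr \<epsilon>"
        using hol[OF x0S] dl de by simp
      also have "\<dots> \<le> Ch * \<delta> N powr \<epsilon>"
        using dl assms(4) Ch by (intro mult_left_mono powr_mono2) auto
      finally show ?thesis by (simp add: norm_minus_commute)
    qed
    have tr: "\<bar>F (x0 + d) - F x0 - (DF x0 d + DF (x0 + d) d) / 2\<bar> \<le> 2 * (Ch * \<delta> N powr \<epsilon>) * norm d ^ 2"
      using trapezoid[OF dF dDF h] by simp
    have b2: "2 * (Ch * \<delta> N powr \<epsilon>) * norm d ^ 2 \<le> 2 * (Ch * \<delta> N powr \<epsilon>) * \<delta> N ^ 2"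
      using nd Ch by (intro mult_left_mono power_mono) auto
    have xd: "x0 + d = v (gp N (Suc k))" unfolding x0_def d_def dv_def by simp
    have Teq: "T N k = (DF x0 d + DF (x0 + d) d) / 2"
      unfolding T_def xd unfolding x0_def d_def by (simp add: blinfun.diff_left field_simps)
    have "T N k - (F (v (gp N (Suc k))) - F (v (gp N k))) = - (F (x0 + d) - F x0 - (DF x0 d + DF (x0 + d) d) / 2)"
      unfolding Teq xd unfolding x0_def by simp
    then have "\<bar>T N k - (F (v (gp N (Suc k))) - F (v (gp N k)))\<bar> = \<bar>F (x0 + d) - F x0 - (DF x0 d + DF (x0 + d) d) / 2\<bar>"
      by simp
    then show ?thesis using tr b2 by linarith
  qed

  have bound: "norm (int_dg (SN N (\<lambda>s. DF (v s))) (SN N v) t - (F (v t) - F (v 0))) \<le> bnd N"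
    if de: "\<delta> N < e" for N
  proof -
    let ?E = "\<lambda>k. T N k - (F (v (gp N (Suc k))) - F (v (gp N k)))"
    have s1: "\<bar>\<Sum>k<KK N. ?E k\<bar> \<le> 2^(N+1) * (2 * (Ch * \<delta> N powr \<epsilon>) * \<delta> N ^ 2)"
    proof -
      have "\<bar>\<Sum>k<KK N. ?E k\<bar> \<le> (\<Sum>k<KK N. \<bar>?E k\<bar>)" by (rule sum_abs)
      also have "\<dots> \<le> of_nat (card {..<KK N}) * (2 * (Ch * \<delta> N powr \<epsilon>) * \<delta> N ^ 2)"
        by (rule sum_bounded_above) (use trap de KKf[of N] in auto)
      also have "\<dots> \<le> 2^(N+1) * (2 * (Ch * \<delta> N powr \<epsilon>) * \<delta> N ^ 2)"
      proof (rule mult_right_mono)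
        have "KK N \<le> 2^(N+1)" using KKf[of N] by simp
        then have "real (KK N) \<le> 2^(N+1)" by (metis of_nat_le_iff of_nat_numeral of_nat_power)
        then show "of_nat (card {..<KK N}) \<le> (2::real)^(N+1)" by simp
        show "0 \<le> 2 * (Ch * \<delta> N powr \<epsilon>) * \<delta> N ^ 2" using Ch by simp
      qed
      finally show ?thesis .
    qed
    have s2: "\<bar>P N\<bar> \<le> 2 * G * \<delta> N"
    proof (cases "KK N < 2^(N+1)")
      case True
      define a where "a = gp N (KK N)"
      define b where "b = gp N (Suc (KK N))"
      define \<tau> where "\<tau> = (t - a) * 2^(N+1)"
      define A where "A = DF (v a) (dv N (KK N))"
      define Bv where "Bv = (DF (v b) - DF (v a)) (dv N (KK N))"
      have Pe: "P N = \<tau> * A + \<tau>^2 / 2 * Bv" using True unfolding P_def \<tau>_def A_def Bv_def a_def b_def by simp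
      have tau: "0 \<le> \<tau>" "\<tau> \<le> 1"
      proof -
        show "0 \<le> \<tau>" unfolding \<tau>_def a_def using KKf[of N] by simp
        have "t - a \<le> 1 / 2^(N+1)" unfolding a_def using KKf[of N] by simp
        then show "\<tau> \<le> 1" unfolding \<tau>_def by (simp add: field_simps)
      qed
      have va: "norm (DF (v a)) \<le> G" unfolding a_def using G gp01[of "KK N" N] True by simp
      have vb: "norm (DF (v b)) \<le> G" unfolding b_def using G gp01[of "Suc (KK N)" N] True by simp
      have nd: "norm (dv N (KK N)) \<le> \<delta> N" using dvb[OF True] .
      have Ab: "\<bar>A\<bar> \<le> G * \<delta> N"
      proof -
        have "\<bar>A\<bar> \<le> norm (DF (v a)) * norm (dv N (KK N))" unfolding A_def using norm_blinfun[of "DF (v a)" "dv N (KK N)"] by simp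
        also have "\<dots> \<le> G * \<delta> N" using va nd G0 by (intro mult_mono) auto
        finally show ?thesis .
      qed
      have Bb: "\<bar>Bv\<bar> \<le> 2 * G * \<delta> N"
      proof -
        have "\<bar>Bv\<bar> \<le> norm (DF (v b) - DF (v a)) * norm (dv N (KK N))" unfolding Bv_def using norm_blinfun[of "DF (v b) - DF (v a)" "dv N (KK N)"] by simp
        also have "\<dots> \<le> (2 * G) * \<delta> N"
        proof (rule mult_mono)
          show "norm (DF (v b) - DF (v a)) \<le> 2 * G" using norm_triangle_ineq4[of "DF (v b)" "DF (v a)"] va vb by simp
        qed (use nd G0 in auto)
        finally show ?thesis by simp
      qed
      have "\<bar>\<tau> * A\<bar> \<le> G * \<delta> N"
        using Ab tau by (simp add: abs_mult) (metis abs_ge_zero mult_le_one mult_mono' order_trans mult_left_le_one_le)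
      moreover have "\<bar>\<tau>^2 / 2 * Bv\<bar> \<le> G * \<delta> N"
      proof -
        have "\<tau>^2 \<le> 1" using tau by (simp add: power_le_one)
        then have "\<bar>\<tau>^2 / 2 * Bv\<bar> \<le> 1 / 2 * \<bar>Bv\<bar>"
          using mult_left_le_one_le[of "\<bar>Bv\<bar>" "\<tau>^2"] by (simp add: abs_mult)
        then show ?thesis using Bb by simp
      qed
      ultimately show ?thesis unfolding Pe by (simp add: abs_triangle_ineq[THEN order_trans])
    next
      case False
      then show ?thesis using G0 K0 q0 unfolding P_def \<delta>_def by simp
    qed
    show ?thesis unfolding errid bnd_def real_norm_def
      using s1 s2 by (smt (verit) abs_triangle_ineq abs_triangle_ineq4)
  qed

  have \<delta>0: "\<delta> \<longlonglongrightarrow> 0"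
  proof -
    have "(\<lambda>N. q^N) \<longlonglongrightarrow> 0" using q0 q1 by (intro LIMSEQ_power_zero) simp
    then have "(\<lambda>N. q^(Suc N)) \<longlonglongrightarrow> 0" by (rule LIMSEQ_Suc)
    then have "(\<lambda>N. K0 * q^(Suc N)) \<longlonglongrightarrow> 0" by (intro tendsto_mult_right_zero)
    then show ?thesis unfolding \<delta>_def by simp
  qed
  have b1: "(\<lambda>N. 2^(N+1) * (2 * (Ch * \<delta> N powr \<epsilon>) * \<delta> N ^ 2)) \<longlonglongrightarrow> 0"
  proof -
    define \<rho> where "\<rho> = 2 * q powr \<epsilon> * q^2"
    have \<rho>1: "\<rho> < 1" unfolding \<rho>_def q_def using rho_lt1[OF assms(5)] .
    have \<rho>0: "\<rho> \<ge> 0" unfolding \<rho>_def by simp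
    have eq: "2^(N+1) * (2 * (Ch * \<delta> N powr \<epsilon>) * \<delta> N ^ 2) = 2 * Ch * (K0 powr \<epsilon> * K0^2 * \<rho>^(N+1))" for N
    proof -
      have "2^(N+1) * (2 * (Ch * \<delta> N powr \<epsilon>) * \<delta> N ^ 2) = 2 * Ch * (2^(N+1) * (\<delta> N powr \<epsilon> * \<delta> N ^ 2))"
        by (simp add: algebra_simps)
      also have "2^(N+1) * (\<delta> N powr \<epsilon> * \<delta> N ^ 2) = K0 powr \<epsilon> * K0^2 * \<rho>^(N+1)"
        unfolding \<delta>_def \<rho>_def by (rule scale_eq[OF q0 K0])
      finally show ?thesis .
    qed
    have "(\<lambda>N. \<rho>^N) \<longlonglongrightarrow> 0" using \<rho>0 \<rho>1 by (intro LIMSEQ_power_zero) simp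
    then have "(\<lambda>N. \<rho>^(Suc N)) \<longlonglongrightarrow> 0" by (rule LIMSEQ_Suc)
    then have "(\<lambda>N. 2 * Ch * (K0 powr \<epsilon> * K0^2 * \<rho>^(Suc N))) \<longlonglongrightarrow> 0"
      by (intro tendsto_mult_right_zero)
    then show ?thesis unfolding eq by simp
  qed
  have b3: "(\<lambda>N. \<bar>F (v t) - F (v (gp N (KK N)))\<bar>) \<longlonglongrightarrow> 0"
  proof -
    have "(\<lambda>N. gp N (KK N)) \<longlonglongrightarrow> t"
    proof (rule tendsto_sandwich[of "\<lambda>N. t - 1 / 2^(N+1)" _ _ "\<lambda>N. t"])
      show "\<forall>\<^sub>F N in sequentially. t - 1 / 2^(N+1) \<le> gp N (KK N)" using KKf by (auto simp: algebra_simps)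
      show "\<forall>\<^sub>F N in sequentially. gp N (KK N) \<le> t" using KKf by auto
      have "(\<lambda>N. (1/2::real)^N) \<longlonglongrightarrow> 0" by (intro LIMSEQ_power_zero) simp
      then have "(\<lambda>N. (1/2::real)^(Suc N)) \<longlonglongrightarrow> 0" by (rule LIMSEQ_Suc)
      then have "(\<lambda>N. t - (1/2::real)^(Suc N)) \<longlonglongrightarrow> t - 0" by (intro tendsto_diff tendsto_const)
      then show "(\<lambda>N. t - 1 / 2^(N+1)) \<longlonglongrightarrow> t" by (simp add: power_one_over)
    qed simp
    moreover have "\<forall>\<^sub>F N in sequentially. gp N (KK N) \<in> {0..1}"
      using gp01 KKf by (intro always_eventually) blast
    ultimately have "(\<lambda>N. F (v (gp N (KK N)))) \<longlonglongrightarrow> F (v t)"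
      using continuous_on_tendsto_compose[OF FVc _ t] by blast
    then have "(\<lambda>N. F (v t) - F (v (gp N (KK N)))) \<longlonglongrightarrow> F (v t) - F (v t)"
      by (intro tendsto_diff tendsto_const)
    then have "(\<lambda>N. \<bar>F (v t) - F (v (gp N (KK N)))\<bar>) \<longlonglongrightarrow> \<bar>F (v t) - F (v t)\<bar>"
      by (rule tendsto_rabs)
    then show ?thesis by simp
  qed
  have bnd0: "bnd \<longlonglongrightarrow> 0"
  proof -
    have "(\<lambda>N. 2 * G * \<delta> N) \<longlonglongrightarrow> 0" using \<delta>0 by (intro tendsto_mult_right_zero)
    then have "(\<lambda>N. 2^(N+1) * (2 * (Ch * \<delta> N powr \<epsilon>) * \<delta> N ^ 2) + 2 * G * \<delta> N
      + \<bar>F (v t) - F (v (gp N (KK N)))\<bar>) \<longlonglongrightarrow> 0 + 0 + 0"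
      using b1 b3 by (intro tendsto_add)
    then show ?thesis unfolding bnd_def by simp
  qed
  have ev: "\<forall>\<^sub>F N in sequentially. \<delta> N < e" using order_tendstoD(2)[OF \<delta>0 e] .
  have "(\<lambda>N. int_dg (SN N (\<lambda>s. DF (v s))) (SN N v) t - (F (v t) - F (v 0))) \<longlonglongrightarrow> 0"
    by (rule Lim_null_comparison[OF eventually_mono[OF ev bound] bnd0])
  then show "(\<lambda>N. int_dg (SN N (\<lambda>s. DF (v s))) (SN N v) t) \<longlonglongrightarrow> F (v t) - F (v 0)"
    by (simp add: Lim_null[symmetric])
qed


end
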